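(* Let $H:\mathbb{R}^3\to\mathbb{R}^3$ be the diffeomorphism $H(x,y,z) = (1.76 - y^2 - 0.1 z,\ x,\ y)$. Let $B=[-1,1]^3$ and let \[ a = \begin{bmatrix} 0.81 \\ 1.0225 \\ 0.975 \end{bmatrix} + \begin{bmatrix} 0 & 0.19 & -0.03 \\ 0.1825 & 0 & 0 \\ 0 & -0.095 & -0.06 \end{bmatrix} B, \qquad b = \begin{bmatrix} 0.81 \\ 1.4875 \\ 0.975 \end{bmatrix} + \begin{bmatrix} 0 & 0.19 & -0.03 \\ 0.1225 & 0 & 0 \\ 0 & -0.095 & -0.06 \end{bmatrix} B . \] Then $H^4$ is uniformly hyperbolic on the compact invariant set $I=\operatorname{Inv}_{H^4}(a\cup b)=\{x\in a\cup b: H^{4n}(x)\in a\cup b \text{ for all } n\in\mathbb{Z}\}$.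
   Context: A diffeomorphism $f:\mathbb{R}^n\to\mathbb{R}^n$ is uniformly hyperbolic on a compact $f$-invariant set $I$ if for every $x\in I$ there is a splitting $\mathbb{R}^n=E^u_x\oplus E^s_x$ with $Df(x)E^u_x=E^u_{f(x)}$ and $Df(x)E^s_x=E^s_{f(x)}$, and there are constants $c>0$, $0<\lambda<1$ independent of $x$ such that for all $k\ge 0$: $\|Df^k(x)v\|<c\lambda^k\|v\|$ for all $v\in E^s_x$, and $\|Df^{-k}(x)v\|<c\lambda^k\|v\|$ for all $v\in E^u_x$. *)

theory Defs
  imports "HOL-Analysis.Analysis"
begin

definition iter_int :: "('a \<Rightarrow> 'a) \<Rightarrow> int \<Rightarrow> 'a \<Rightarrow> 'a" where
  "iter_int f n = (if 0 \<le> n then f ^^ nat n else (inv f) ^^ nat (- n))"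

definition Inv :: "('a \<Rightarrow> 'a) \<Rightarrow> 'a set \<Rightarrow> 'a set" where
  "Inv f N = {x \<in> N. \<forall>n::int. iter_int f n x \<in> N}"

definition unif_hyperbolic :: "('a::euclidean_space \<Rightarrow> 'a) \<Rightarrow> 'a set \<Rightarrow> bool" where
  "unif_hyperbolic f I \<longleftrightarrow>
     compact I \<and> f ` I = I \<and>
     (\<forall>x\<in>I. \<forall>k. (f ^^ k) differentiable (at x) \<and> ((inv f) ^^ k) differentiable (at x)) \<and>
     (\<exists>Eu Es c lam. c > 0 \<and> 0 < lam \<and> lam < (1::real) \<and>
       (\<forall>x\<in>I.
          subspace (Eu x) \<and> subspace (Es x) \<and> Eu x \<inter> Es x = {0} \<and>
          (\<forall>w. \<exists>u\<in>Eu x. \<exists>s\<in>Es x. w = u + s) \<and>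
          frechet_derivative f (at x) ` Eu x = Eu (f x) \<and>
          frechet_derivative f (at x) ` Es x = Es (f x) \<and>
          (\<forall>k::nat. \<forall>v\<in>Es x. v \<noteq> 0 \<longrightarrow>
             norm (frechet_derivative (f ^^ k) (at x) v) < c * lam ^ k * norm v) \<and>
          (\<forall>k::nat. \<forall>v\<in>Eu x. v \<noteq> 0 \<longrightarrow>
             norm (frechet_derivative ((inv f) ^^ k) (at x) v) < c * lam ^ k * norm v)))"

definition H :: "real^3 \<Rightarrow> real^3" where
  "H p = vector [1.76 - (p$2)^2 - 0.1 * p$3, p$1, p$2]"

definition cubeB :: "(real^3) set" where
  "cubeB = {u. \<forall>i. \<bar>u$i\<bar> \<le> 1}"

definition box_a :: "(real^3) set" where
  "box_a = (\<lambda>u. vector [0.81, 1.0225, 0.975] +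
      (vector [vector [0, 0.19, -0.03], vector [0.1825, 0, 0], vector [0, -0.095, -0.06]]
        :: real^3^3) *v u) ` cubeB"

definition box_b :: "(real^3) set" where
  "box_b = (\<lambda>u. vector [0.81, 1.4875, 0.975] +
      (vector [vector [0, 0.19, -0.03], vector [0.1225, 0, 0], vector [0, -0.095, -0.06]]
        :: real^3^3) *v u) ` cubeB"

end

theory Submission
  imports Defs
begin


definition DH :: "real^3 \<Rightarrow> real^3 \<Rightarrow> real^3" where
  "DH p v = vector [-2 * p$2 * v$2 - 0.1 * v$3, v$1, v$2]"

definition Hi :: "real^3 \<Rightarrow> real^3" where
  "Hi q = vector [q$2, q$3, 10 * (1.76 - (q$3)^2 - q$1)]"

definition DHi :: "real^3 \<Rightarrow> real^3 \<Rightarrow> real^3" where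
  "DHi q v = vector [v$2, v$3, -10 * v$1 - 20 * q$3 * v$3]"

lemma vec3_eqI: "x$1 = y$1 \<Longrightarrow> x$2 = y$2 \<Longrightarrow> x$3 = (y::real^3)$3 \<Longrightarrow> x = y"
  by (simp add: vec_eq_iff forall_3)

lemma e3_comp: "(axis (i::3) (1::real)) $ j = (if j = i then 1 else 0)"
  by (simp add: axis_def)

lemma H_alt: "H p = (1.76 - (p$2)^2 - 0.1 * p$3) *\<^sub>R axis 1 1 + (p$1) *\<^sub>R axis 2 1 + (p$2) *\<^sub>R axis 3 1"
  by (rule vec3_eqI) (simp_all add: H_def axis_def)

lemma DH_alt: "DH p v = (-2 * p$2 * v$2 - 0.1 * v$3) *\<^sub>R axis 1 1 + (v$1) *\<^sub>R axis 2 1 + (v$2) *\<^sub>R axis 3 1"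
  by (rule vec3_eqI) (simp_all add: DH_def axis_def)

lemma Hi_alt: "Hi p = (p$2) *\<^sub>R axis 1 1 + (p$3) *\<^sub>R axis 2 1 + (10 * (1.76 - (p$3)^2 - p$1)) *\<^sub>R axis 3 1"
  by (rule vec3_eqI) (simp_all add: Hi_def axis_def)

lemma DHi_alt: "DHi p v = (v$2) *\<^sub>R axis 1 1 + (v$3) *\<^sub>R axis 2 1 + (-10 * v$1 - 20 * p$3 * v$3) *\<^sub>R axis 3 1"
  by (rule vec3_eqI) (simp_all add: DHi_def axis_def)

lemma vnth_deriv: "((\<lambda>x::real^3. x$i) has_derivative (\<lambda>v. v$i)) (at p)"
  by (rule bounded_linear.has_derivative[OF bounded_linear_vec_nth has_derivative_ident])

lemma sc1: "((\<lambda>x::real^3. 1.76 - (x$2)^2 - 0.1 * x$3) has_derivative (\<lambda>v. -2 * p$2 * v$2 - 0.1 * v$3)) (at p)"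
proof -
  have A: "((\<lambda>x::real^3. 1.76 - (x$2)^2 - 0.1 * x$3) has_derivative (\<lambda>v. 0 - of_nat 2 * v$2 * (p$2)^(2-1) - 0.1 * v$3)) (at p)"
    by (intro has_derivative_diff has_derivative_const has_derivative_power has_derivative_mult_right vnth_deriv)
  have eq: "(\<lambda>v::real^3. 0 - of_nat 2 * v$2 * (p$2)^(2-1) - 0.1 * v$3) = (\<lambda>v. -2 * p$2 * v$2 - 0.1 * v$3)"
    by (auto simp: fun_eq_iff)
  from A show ?thesis by (simp only: eq)
qed

lemma sc2: "((\<lambda>x::real^3. 10 * (1.76 - (x$3)^2 - x$1)) has_derivative (\<lambda>v. -10 * v$1 - 20 * p$3 * v$3)) (at p)"
proof -
  have A: "((\<lambda>x::real^3. 10 * (1.76 - (x$3)^2 - x$1)) has_derivative (\<lambda>v. 10 * (0 - of_nat 2 * v$3 * (p$3)^(2-1) - v$1))) (at p)"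
    by (intro has_derivative_diff has_derivative_const has_derivative_power has_derivative_mult_right vnth_deriv)
  have eq: "(\<lambda>v::real^3. 10 * (0 - of_nat 2 * v$3 * (p$3)^(2-1) - v$1)) = (\<lambda>v. -10 * v$1 - 20 * p$3 * v$3)"
    by (auto simp: fun_eq_iff algebra_simps)
  from A show ?thesis by (simp only: eq)
qed

lemma H_deriv: "(H has_derivative DH p) (at p)"
  unfolding H_alt[abs_def] DH_alt[abs_def]
  by (intro has_derivative_add has_derivative_scaleR_left sc1 vnth_deriv)

lemma Hi_deriv: "(Hi has_derivative DHi p) (at p)"
  unfolding Hi_alt[abs_def] DHi_alt[abs_def]
  by (intro has_derivative_add has_derivative_scaleR_left sc2 vnth_deriv)

lemma H_Hi: "H (Hi q) = q"
  by (rule vec3_eqI) (simp_all add: H_def Hi_def algebra_simps)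
lemma Hi_H: "Hi (H q) = q"
  by (rule vec3_eqI) (simp_all add: H_def Hi_def algebra_simps)

lemma inv_H4: "inv (H ^^ 4) = Hi ^^ 4"
proof -
  have b: "bij H" by (metis H_Hi Hi_H bij_betw_byWitness top_greatest)
  have "inv H = Hi" by (rule inv_equality) (simp_all add: H_Hi Hi_H)
  then show ?thesis using inv_fn[OF b] by simp
qed


fun DI :: "('a \<Rightarrow> 'a) \<Rightarrow> ('a \<Rightarrow> 'a \<Rightarrow> 'a) \<Rightarrow> nat \<Rightarrow> 'a \<Rightarrow> 'a \<Rightarrow> 'a" where
  "DI g Dg 0 x = id"
| "DI g Dg (Suc k) x = DI g Dg k (g x) \<circ> Dg x"

lemma DI_deriv:
  assumes "\<And>x. (g has_derivative Dg x) (at x)"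
  shows "((g ^^ k) has_derivative DI g Dg k x) (at x)"
proof (induction k arbitrary: x)
  case 0
  then show ?case by (simp add: id_def[symmetric] has_derivative_ident)
next
  case (Suc k)
  have "((\<lambda>y. (g ^^ k) (g y)) has_derivative (\<lambda>v. DI g Dg k (g x) (Dg x v))) (at x)"
    by (rule has_derivative_compose[OF assms Suc.IH])
  then show ?case by (simp only: funpow_Suc_right o_def DI.simps)
qed

lemma DI_add: "DI g Dg (m + j) y = DI g Dg j ((g ^^ m) y) \<circ> DI g Dg m y"
proof (induction m arbitrary: y)
  case 0 then show ?case by simp
next
  case (Suc m)
  show ?case using Suc.IH[of "g y"] by (simp add: funpow_swap1 o_assoc)
qed

lemma DI_Suc': "DI g Dg (Suc n) y v = Dg ((g ^^ n) y) (DI g Dg n y v)"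
  using DI_add[of g Dg n 1 y] by simp

lemma funpow_inverse_gen: fixes f g :: "'a \<Rightarrow> 'a" assumes "\<And>x. f (g x) = x" shows "(f ^^ n) ((g ^^ n) x) = x"
proof (induction n arbitrary: x)
  case 0 show ?case by simp
next
  case (Suc n)
  have "(f ^^ Suc n) ((g ^^ Suc n) x) = f ((f ^^ n) ((g ^^ n) (g x)))"
    by (simp only: funpow.simps(2)[of n f] funpow_Suc_right[of n g] o_apply)
  also have "\<dots> = x" using assms Suc.IH by simp
  finally show ?case .
qed

definition F :: "real^3 \<Rightarrow> real^3" where "F = H ^^ 4"
definition G :: "real^3 \<Rightarrow> real^3" where "G = Hi ^^ 4"
definition LF :: "real^3 \<Rightarrow> real^3 \<Rightarrow> real^3" where "LF x = DI H DH 4 x"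
definition LG :: "real^3 \<Rightarrow> real^3 \<Rightarrow> real^3" where "LG x = DI Hi DHi 4 x"

lemma F_deriv: "(F has_derivative LF x) (at x)"
  unfolding F_def LF_def by (rule DI_deriv[OF H_deriv])
lemma G_deriv: "(G has_derivative LG x) (at x)"
  unfolding G_def LG_def by (rule DI_deriv[OF Hi_deriv])

lemma FG: "F (G x) = x" unfolding F_def G_def by (rule funpow_inverse_gen) (rule H_Hi)
lemma GF: "G (F x) = x" unfolding F_def G_def by (rule funpow_inverse_gen) (rule Hi_H)

lemma LF_LG: "LF (G x) (LG x v) = v"
proof -
  have "((\<lambda>y. F (G y)) has_derivative (\<lambda>v. LF (G x) (LG x v))) (at x)"
    by (rule has_derivative_compose[OF G_deriv F_deriv])
  moreover have "((\<lambda>y. F (G y)) has_derivative (\<lambda>v. v)) (at x)"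
    by (simp add: FG has_derivative_ident)
  ultimately have "(\<lambda>v. LF (G x) (LG x v)) = (\<lambda>v. v)" by (rule has_derivative_unique)
  then show ?thesis by metis
qed

lemma LG_LF: "LG (F x) (LF x v) = v"
proof -
  have "((\<lambda>y. G (F y)) has_derivative (\<lambda>v. LG (F x) (LF x v))) (at x)"
    by (rule has_derivative_compose[OF F_deriv G_deriv])
  moreover have "((\<lambda>y. G (F y)) has_derivative (\<lambda>v. v)) (at x)"
    by (simp add: GF has_derivative_ident)
  ultimately have "(\<lambda>v. LG (F x) (LF x v)) = (\<lambda>v. v)" by (rule has_derivative_unique)
  then show ?thesis by metis
qed

abbreviation "Dk k x \<equiv> DI F LF k x"
abbreviation "Bk k x \<equiv> DI G LG k x"

lemma Dk_deriv: "((F ^^ k) has_derivative Dk k x) (at x)"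
  by (rule DI_deriv[OF F_deriv])
lemma Bk_deriv: "((G ^^ k) has_derivative Bk k x) (at x)"
  by (rule DI_deriv[OF G_deriv])

lemma Dk_linear: "linear (Dk k x)"
  using Dk_deriv has_derivative_linear by blast
lemma Bk_linear: "linear (Bk k x)"
  using Bk_deriv has_derivative_linear by blast
lemma LF_linear: "linear (LF x)"
  using F_deriv has_derivative_linear by blast
lemma LG_linear: "linear (LG x)"
  using G_deriv has_derivative_linear by blast

lemma BD: "Bk n ((F ^^ n) y) (Dk n y w) = w"
proof (induction n arbitrary: y w)
  case 0 then show ?case by simp
next
  case (Suc n)
  have "Bk (Suc n) ((F ^^ Suc n) y) (Dk (Suc n) y w)
      = Bk n (G (F ((F ^^ n) y))) (LG (F ((F ^^ n) y)) (LF ((F ^^ n) y) (Dk n y w)))"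
    by (simp only: DI_Suc'[of F LF n y w] funpow.simps(2) o_apply DI.simps(2)[of G LG n])
  also have "\<dots> = Bk n ((F ^^ n) y) (Dk n y w)"
    by (simp only: GF LG_LF)
  also have "\<dots> = w" by (rule Suc.IH)
  finally show ?case .
qed

lemma LF_explicit: "LF x v = DH (H (H (H x))) (DH (H (H x)) (DH (H x) (DH x v)))"
  by (simp add: LF_def numeral_eq_Suc)


lemma lin3: fixes A B C M :: real
  shows "\<bar>A\<bar> \<le> M \<Longrightarrow> \<bar>B\<bar> \<le> M \<Longrightarrow> \<bar>C\<bar> \<le> M / 0.82 \<Longrightarrow> \<bar>0.5 * A + 0.005 * B - 0.0125 * C\<bar> \<le> 0.5 * M + 0.005 * M + 0.0125 * (M / 0.82)"
  by (simp only: abs_le_iff) (simp, linarith?)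

lemma R2_real:
  fixes sz y z sb va vb vc da db dd :: real
  assumes z: "0.82 \<le> z" and sb: "0.82 \<le> sb"
    and d1: "da = -2 * y * vb - 0.1 * vc" and d2: "db = -2 * sz * va - 0.1 * vb"
    and d4: "dd = -2 * sb * db - 0.1 * da"
  shows "\<bar>5 * (db + dd / (2 * sb))\<bar> \<le> 20/21 * max (max \<bar>va\<bar> \<bar>y * vb\<bar>) \<bar>5 * (vc + va / (2 * z))\<bar>"
proof -
  define M where "M = max (max \<bar>va\<bar> \<bar>y * vb\<bar>) \<bar>5 * (vc + va / (2 * z))\<bar>"
  define q' where "q' = 5 * (db + dd / (2 * sb))"
  have M1: "\<bar>va\<bar> \<le> M" and M2: "\<bar>y * vb\<bar> \<le> M" and M3: "\<bar>5 * (vc + va / (2 * z))\<bar> \<le> M"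
    unfolding M_def by auto
  have e: "q' * sb = 0.5 * (y * vb) + 0.005 * (5 * (vc + va / (2 * z))) - 0.0125 * (va / z)"
    using z sb unfolding q'_def d4 d1 d2 by (simp add: field_simps)
  have a: "\<bar>va / z\<bar> \<le> M / 0.82"
  proof -
    have "\<bar>va / z\<bar> = \<bar>va\<bar> / z" using z by simp
    also have "\<dots> \<le> \<bar>va\<bar> / 0.82" using z by (intro divide_left_mono) auto
    also have "\<dots> \<le> M / 0.82" using M1 by (intro divide_right_mono) auto
    finally show ?thesis .
  qed
  have "\<bar>q' * sb\<bar> \<le> 0.5 * M + 0.005 * M + 0.0125 * (M / 0.82)"
    unfolding e by (rule lin3[OF M2 M3 a])
  moreover have "\<bar>q' * sb\<bar> = \<bar>q'\<bar> * sb" using sb by (simp add: abs_mult)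
  moreover have "\<bar>q'\<bar> * 0.82 \<le> \<bar>q'\<bar> * sb" using sb by (intro mult_left_mono) auto
  moreover have "0 \<le> M" using M1 by linarith
  ultimately have "\<bar>q'\<bar> * 0.82 \<le> 0.53 * M" by simp
  then have "\<bar>q'\<bar> \<le> 20/21 * M" using \<open>0 \<le> M\<close> by simp
  then show ?thesis unfolding q'_def M_def .
qed

lemma t_bound:
  fixes t sz sc :: real
  assumes "0 \<le> t" "sz \<le> 1.03" "0.84 \<le> sc" "sc \<le> 1.61" "sc = 1.76 - t^2 - 0.1 * sz"
  shows "1.05 \<le> sc * (3.838 * t - 0.1)"
proof -
  have "t^2 \<ge> 0.047" using assms by simp
  have t1: "t \<ge> 0.2167"
  proof (rule ccontr)
    assume "\<not> t \<ge> 0.2167"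
    then have "t < 0.2167" by simp
    then have "t * t \<le> 0.2167 * 0.2167" using assms(1) by (intro mult_mono) auto
    then show False using \<open>t^2 \<ge> 0.047\<close> by (simp add: power2_eq_square)
  qed
  show ?thesis
  proof (cases "t \<le> 0.4")
    case True
    then have "t * t \<le> 0.4 * 0.4" using assms(1) by (intro mult_mono) auto
    then have "sc \<ge> 1.497" using assms by (simp add: power2_eq_square)
    moreover have "3.838 * t - 0.1 \<ge> 0.7316" using t1 by simp
    ultimately have "sc * (3.838 * t - 0.1) \<ge> 1.497 * 0.7316" by (intro mult_mono) auto
    then show ?thesis by simp
  next
    case False
    then have "3.838 * t - 0.1 \<ge> 1.4352" by simp
    then have "sc * (3.838 * t - 0.1) \<ge> 0.84 * 1.4352" using assms by (intro mult_mono) auto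
    then show ?thesis by simp
  qed
qed

lemma R1_real:
  fixes sz y z sa sb sc va vb vc da db dc dd :: real
  assumes b: "0.59 \<le> sz" "sz \<le> 1.03" "0.84 \<le> y" "0.82 \<le> z" "0.82 \<le> sb" "sb \<le> 1.13"
     "0.84 \<le> sc" "sc \<le> 1.61"
    and hs3: "sc = 1.76 - sa^2 - 0.1 * sz"
    and d1: "da = -2 * y * vb - 0.1 * vc" and d2: "db = -2 * sz * va - 0.1 * vb"
    and d3: "dc = -2 * sa * da - 0.1 * va"
    and d4: "dd = -2 * sb * db - 0.1 * da"
    and cone: "\<bar>5 * (vc + va / (2 * z))\<bar> \<le> max \<bar>va\<bar> \<bar>y * vb\<bar>"
  shows "21/20 * max \<bar>va\<bar> \<bar>y * vb\<bar> \<le> max \<bar>dd\<bar> \<bar>sc * dc\<bar>"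
proof -
  define N where "N = max \<bar>va\<bar> \<bar>y * vb\<bar>"
  have N0: "0 \<le> N" unfolding N_def by simp
  have Nv1: "\<bar>va\<bar> \<le> N" and Nv2: "\<bar>y * vb\<bar> \<le> N" unfolding N_def by auto
  have q: "\<bar>5 * (vc + va / (2 * z))\<bar> \<le> N" using cone unfolding N_def .
  have w: "\<bar>va / (2 * z)\<bar> \<le> N / 1.64"
  proof -
    have "\<bar>va / (2 * z)\<bar> = \<bar>va\<bar> / (2 * z)" using b by simp
    also have "\<dots> \<le> \<bar>va\<bar> / 1.64" using b by (intro divide_left_mono) auto
    also have "\<dots> \<le> N / 1.64" using Nv1 by (intro divide_right_mono) auto
    finally show ?thesis .
  qed
  have vc: "\<bar>vc\<bar> \<le> 0.81 * N"
  proof -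
    have "vc = (5 * (vc + va / (2 * z))) / 5 - va / (2 * z)" by (simp add: add_divide_distrib)
    then show ?thesis using q w N0 by (simp only: abs_le_iff) (simp, linarith?)
  qed
  show ?thesis
  proof (cases "\<bar>y * vb\<bar> \<le> \<bar>va\<bar>")
    case True
    then have Na: "N = \<bar>va\<bar>" unfolding N_def by simp
    have e4: "dd = 4 * (sz * sb) * va + 0.2 * (sb * vb) + 0.2 * (y * vb) + 0.01 * vc"
      unfolding d4 d2 d1 by (simp add: algebra_simps)
    have yv2: "\<bar>vb\<bar> * 0.84 \<le> N"
    proof -
      have "\<bar>vb\<bar> * 0.84 \<le> \<bar>vb\<bar> * y" using b by (intro mult_left_mono) auto
      also have "\<dots> = \<bar>y * vb\<bar>" using b by (simp add: abs_mult)
      finally show ?thesis using Nv2 by linarith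
    qed
    have s2v2: "\<bar>sb * vb\<bar> \<le> 1.13 * \<bar>vb\<bar>"
    proof -
      have "\<bar>sb * vb\<bar> = sb * \<bar>vb\<bar>" using b by (simp add: abs_mult)
      also have "\<dots> \<le> 1.13 * \<bar>vb\<bar>" using b by (intro mult_right_mono) auto
      finally show ?thesis .
    qed
    have X: "sz * sb \<ge> 0.59 * 0.82" using b by (intro mult_mono) auto
    have Xa: "(sz * sb) * \<bar>va\<bar> \<ge> (0.59 * 0.82) * \<bar>va\<bar>" using X by (intro mult_right_mono) auto
    have Xb: "\<bar>4 * (sz * sb) * va\<bar> = 4 * ((sz * sb) * \<bar>va\<bar>)"
      using X b by (simp add: abs_mult)
    have P: "\<bar>4 * (sz * sb) * va\<bar> \<ge> 1.9352 * N" using Xa Xb Na by simp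
    have R: "\<bar>0.2 * (sb * vb) + 0.2 * (y * vb) + 0.01 * vc\<bar> \<le> 0.2 * (1.13 * \<bar>vb\<bar>) + 0.2 * N + 0.01 * (0.81 * N)"
      using s2v2 Nv2 vc by (simp only: abs_le_iff) simp
    have tri: "\<bar>dd\<bar> \<ge> \<bar>4 * (sz * sb) * va\<bar> - \<bar>0.2 * (sb * vb) + 0.2 * (y * vb) + 0.01 * vc\<bar>"
      unfolding e4 by (simp only: add.assoc)
    have "\<bar>dd\<bar> \<ge> 21/20 * N"
      using P R tri yv2 N0 by simp
    moreover have "\<bar>dd\<bar> \<le> max \<bar>dd\<bar> \<bar>sc * dc\<bar>" by simp
    ultimately show ?thesis unfolding N_def by linarith
  next
    case False
    then have Nb: "N = \<bar>y * vb\<bar>" unfolding N_def by simp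
    define t where "t = \<bar>sa\<bar>"
    have t0: "0 \<le> t" unfolding t_def by simp
    have e3: "dc = 4 * sa * (y * vb) + 0.2 * (sa * vc) - 0.1 * va"
      unfolding d3 d1 by (simp add: algebra_simps)
    have a1: "\<bar>4 * sa * (y * vb)\<bar> = 4 * t * N" unfolding t_def Nb by (simp add: abs_mult)
    have a2: "\<bar>sa * vc\<bar> \<le> t * (0.81 * N)" unfolding t_def abs_mult
      using vc by (intro mult_left_mono) auto
    have tri: "\<bar>dc\<bar> \<ge> \<bar>4 * sa * (y * vb)\<bar> - 0.2 * \<bar>sa * vc\<bar> - 0.1 * \<bar>va\<bar>"
      unfolding e3 by arith
    have d3b: "\<bar>dc\<bar> \<ge> (3.838 * t - 0.1) * N"
      using tri a1 a2 Nv1 by (simp add: algebra_simps)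
    have "t^2 = sa^2" unfolding t_def by simp
    then have K: "1.05 \<le> sc * (3.838 * t - 0.1)"
      using t_bound[of t sz sc] t0 b hs3 by simp
    have "\<bar>sc * dc\<bar> = sc * \<bar>dc\<bar>" using b by (simp add: abs_mult)
    also have "\<dots> \<ge> sc * ((3.838 * t - 0.1) * N)" using d3b b by (intro mult_left_mono) auto
    finally have "\<bar>sc * dc\<bar> \<ge> (sc * (3.838 * t - 0.1)) * N" by (simp add: mult.assoc)
    moreover have "(sc * (3.838 * t - 0.1)) * N \<ge> 1.05 * N" using K N0 by (intro mult_right_mono) auto
    ultimately have "\<bar>sc * dc\<bar> \<ge> 21/20 * N" by simp
    moreover have "\<bar>sc * dc\<bar> \<le> max \<bar>dd\<bar> \<bar>sc * dc\<bar>" by simp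
    ultimately show ?thesis unfolding N_def by linarith
  qed
qed


definition Bx :: "(real^3) set" where
  "Bx = {p. 0.59 \<le> p$1 \<and> p$1 \<le> 1.03 \<and> 0.84 \<le> p$2 \<and> p$2 \<le> 1.61 \<and> 0.82 \<le> p$3 \<and> p$3 \<le> 1.13}"

definition NN :: "real^3 \<Rightarrow> real^3 \<Rightarrow> real" where
  "NN p v = max \<bar>v$1\<bar> \<bar>p$2 * v$2\<bar>"

definition QQ :: "real^3 \<Rightarrow> real^3 \<Rightarrow> real" where
  "QQ p v = \<bar>5 * (v$3 + v$1 / (2 * p$3))\<bar>"

lemma LF_comp:
  "(LF x v)$1 = -2 * (1.76 - (x$1)^2 - 0.1 * x$2) * (-2 * x$1 * v$1 - 0.1 * v$2) - 0.1 * (-2 * x$2 * v$2 - 0.1 * v$3)"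
  "(LF x v)$2 = -2 * (1.76 - (x$2)^2 - 0.1 * x$3) * (-2 * x$2 * v$2 - 0.1 * v$3) - 0.1 * v$1"
  "(LF x v)$3 = -2 * x$1 * v$1 - 0.1 * v$2"
  "(F x)$2 = 1.76 - (1.76 - (x$2)^2 - 0.1 * x$3)^2 - 0.1 * x$1"
  "(F x)$3 = 1.76 - (x$1)^2 - 0.1 * x$2"
  by (simp_all add: LF_explicit DH_def H_def F_def numeral_eq_Suc)

lemma box_coord:
  fixes u :: "real^3"
  shows "(vector [0.81, c2, 0.975] +
      (vector [vector [0, 0.19, -0.03], vector [m, 0, 0], vector [0, -0.095, -0.06]] :: real^3^3) *v u)$1
      = 0.81 + 0.19 * u$2 - 0.03 * u$3"
  and "(vector [0.81, c2, 0.975] +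
      (vector [vector [0, 0.19, -0.03], vector [m, 0, 0], vector [0, -0.095, -0.06]] :: real^3^3) *v u)$2
      = c2 + m * u$1"
  and "(vector [0.81, c2, 0.975] +
      (vector [vector [0, 0.19, -0.03], vector [m, 0, 0], vector [0, -0.095, -0.06]] :: real^3^3) *v u)$3
      = 0.975 - 0.095 * u$2 - 0.06 * u$3"
  by (simp_all add: matrix_vector_mult_def sum_3)

lemma box_sub: "box_a \<union> box_b \<subseteq> Bx"
proof
  fix p assume "p \<in> box_a \<union> box_b"
  then obtain u c2 m where u: "\<forall>i. \<bar>u$i\<bar> \<le> 1"
    and cm: "(c2 = 1.0225 \<and> m = 0.1825) \<or> (c2 = 1.4875 \<and> m = 0.1225)"
    and p: "p = vector [0.81, c2, 0.975] +
      (vector [vector [0, 0.19, -0.03], vector [m, 0, 0], vector [0, -0.095, -0.06]] :: real^3^3) *v u"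
    unfolding box_a_def box_b_def cubeB_def by blast
  have p1: "p$1 = 0.81 + 0.19 * u$2 - 0.03 * u$3"
    and p2: "p$2 = c2 + m * u$1"
    and p3: "p$3 = 0.975 - 0.095 * u$2 - 0.06 * u$3"
    unfolding p by (rule box_coord)+
  have u1: "\<bar>u$1\<bar> \<le> 1" and u2: "\<bar>u$2\<bar> \<le> 1" and u3: "\<bar>u$3\<bar> \<le> 1" using u by auto
  have m0: "0 \<le> m" using cm by auto
  have "\<bar>m * u$1\<bar> \<le> m" using m0 u1 by (simp add: abs_mult mult_left_le)
  then show "p \<in> Bx" unfolding Bx_def using p1 p2 p3 u1 u2 u3 cm
    by (simp only: abs_le_iff mem_Collect_eq) (simp, linarith?)
qed

lemma NB1: assumes "p \<in> Bx" shows "norm v \<le> 4 * max (NN p v) (QQ p v)"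
proof -
  define M where "M = max (NN p v) (QQ p v)"
  have b: "0.84 \<le> p$2" "0.82 \<le> p$3" using assms unfolding Bx_def by auto
  have M1: "\<bar>v$1\<bar> \<le> M" and M2: "\<bar>p$2 * v$2\<bar> \<le> M" and M3: "\<bar>5 * (v$3 + v$1 / (2 * p$3))\<bar> \<le> M"
    unfolding M_def NN_def QQ_def by auto
  have v2: "\<bar>v$2\<bar> * 0.84 \<le> M"
  proof -
    have "\<bar>v$2\<bar> * 0.84 \<le> \<bar>v$2\<bar> * p$2" using b by (intro mult_left_mono) auto
    also have "\<dots> = \<bar>p$2 * v$2\<bar>" using b by (simp add: abs_mult)
    finally show ?thesis using M2 by linarith
  qed
  have w: "\<bar>v$1 / (2 * p$3)\<bar> \<le> M / 1.64"
  proof -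
    have "\<bar>v$1 / (2 * p$3)\<bar> = \<bar>v$1\<bar> / (2 * p$3)" using b by simp
    also have "\<dots> \<le> \<bar>v$1\<bar> / 1.64" using b by (intro divide_left_mono) auto
    also have "\<dots> \<le> M / 1.64" using M1 by (intro divide_right_mono) auto
    finally show ?thesis .
  qed
  have v3: "\<bar>v$3\<bar> \<le> 0.81 * M"
  proof -
    have "v$3 = (5 * (v$3 + v$1 / (2 * p$3))) / 5 - v$1 / (2 * p$3)" by (simp add: add_divide_distrib)
    then show ?thesis using M3 w M1 by (simp only: abs_le_iff) (simp, linarith?)
  qed
  have "norm v \<le> \<bar>v$1\<bar> + \<bar>v$2\<bar> + \<bar>v$3\<bar>" using norm_le_l1_cart[of v] by (simp add: sum_3)
  then show ?thesis using M1 v2 v3 unfolding M_def[symmetric] by simp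
qed

lemma NB2: assumes "p \<in> Bx" shows "NN p v \<le> 9 * norm v" "QQ p v \<le> 9 * norm v"
proof -
  have b: "p$2 \<le> 1.61" "0.84 \<le> p$2" "0.82 \<le> p$3" using assms unfolding Bx_def by auto
  have n1: "\<bar>v$1\<bar> \<le> norm v" and n2: "\<bar>v$2\<bar> \<le> norm v" and n3: "\<bar>v$3\<bar> \<le> norm v"
    by (simp_all add: component_le_norm_cart)
  have "\<bar>p$2 * v$2\<bar> = p$2 * \<bar>v$2\<bar>" using b by (simp add: abs_mult)
  also have "\<dots> \<le> 1.61 * norm v" using b n2 by (intro mult_mono) auto
  finally have a2: "\<bar>p$2 * v$2\<bar> \<le> 1.61 * norm v" .
  have "1.61 * norm v \<le> 9 * norm v" by (intro mult_right_mono) auto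
  with a2 have a3: "\<bar>p$2 * v$2\<bar> \<le> 9 * norm v" by (rule order_trans)
  have "norm v \<le> 9 * norm v" by simp
  with n1 have a4: "\<bar>v$1\<bar> \<le> 9 * norm v" by (rule order_trans)
  show "NN p v \<le> 9 * norm v" unfolding NN_def using a3 a4 by simp
  have w: "\<bar>v$1 / (2 * p$3)\<bar> \<le> norm v / 1.64"
  proof -
    have "\<bar>v$1 / (2 * p$3)\<bar> = \<bar>v$1\<bar> / (2 * p$3)" using b by simp
    also have "\<dots> \<le> \<bar>v$1\<bar> / 1.64" using b by (intro divide_left_mono) auto
    also have "\<dots> \<le> norm v / 1.64" using n1 by (intro divide_right_mono) auto
    finally show ?thesis .
  qed
  show "QQ p v \<le> 9 * norm v" unfolding QQ_def using w n3
    by (simp only: abs_le_iff) (simp, linarith?)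
qed

lemma KEY:
  assumes x: "x \<in> Bx" and Fx: "F x \<in> Bx"
  shows "QQ x v \<le> NN x v \<Longrightarrow> 21/20 * NN x v \<le> NN (F x) (LF x v)"
    and "QQ (F x) (LF x v) \<le> 20/21 * max (NN x v) (QQ x v)"
proof -
  have bx: "0.59 \<le> x$1" "x$1 \<le> 1.03" "0.84 \<le> x$2" "0.82 \<le> x$3" using x unfolding Bx_def by auto
  have bF: "0.82 \<le> (F x)$3" "(F x)$3 \<le> 1.13" "0.84 \<le> (F x)$2" "(F x)$2 \<le> 1.61" using Fx unfolding Bx_def by auto
  show "QQ x v \<le> NN x v \<Longrightarrow> 21/20 * NN x v \<le> NN (F x) (LF x v)"
    unfolding NN_def QQ_def
    apply (rule R1_real[where sz = "x$1" and y = "x$2" and z = "x$3" and sb = "(F x)$3" and sc = "(F x)$2"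
        and sa = "1.76 - (x$2)^2 - 0.1 * x$3" and da = "-2 * x$2 * v$2 - 0.1 * v$3"
        and db = "-2 * x$1 * v$1 - 0.1 * v$2"])
    using bx bF by (simp_all add: LF_comp)
  show "QQ (F x) (LF x v) \<le> 20/21 * max (NN x v) (QQ x v)"
    unfolding NN_def QQ_def
    apply (rule R2_real[where sz = "x$1" and y = "x$2" and z = "x$3" and sb = "(F x)$3"
        and da = "-2 * x$2 * v$2 - 0.1 * v$3"])
    using bx bF by (simp_all add: LF_comp)
qed


abbreviation "SS \<equiv> box_a \<union> box_b"
abbreviation "II \<equiv> Inv (H ^^ 4) SS"

lemma invF: "inv F = G" unfolding F_def G_def by (rule inv_H4)

lemma iter_F: "iter_int F n (F x) = iter_int F (n + 1) x"
proof (cases "0 \<le> n")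
  case True
  then have "nat (n + 1) = Suc (nat n)" by simp
  then show ?thesis using True by (simp add: iter_int_def funpow_swap1)
next
  case False
  then obtain k where k: "nat (- n) = Suc k" "nat (-(n+1)) = k" by (intro that[of "nat (-(n+1))"]) auto
  show ?thesis
  proof (cases "0 \<le> n + 1")
    case True
    then have "k = 0" using k False by simp
    then show ?thesis using False True k by (simp add: iter_int_def invF GF)
  next
    case F2: False
    have e: "(G ^^ Suc k) (F x) = (G ^^ k) x" by (simp only: funpow_Suc_right o_apply GF)
    show ?thesis using False F2 k e by (simp add: iter_int_def invF)
  qed
qed

lemma iter_G: "iter_int F n (G x) = iter_int F (n - 1) x"
  using iter_F[of "n - 1" "G x"] by (simp add: FG)

lemma II_def': "II = {x \<in> SS. \<forall>n. iter_int F n x \<in> SS}"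
  unfolding Inv_def F_def ..

lemma I_F: assumes "x \<in> II" shows "F x \<in> II"
proof -
  have h: "\<forall>n. iter_int F n x \<in> SS" using assms unfolding II_def' by blast
  have "iter_int F 1 x = F x" by (simp add: iter_int_def)
  then have "F x \<in> SS" using h by metis
  moreover have "\<forall>n. iter_int F n (F x) \<in> SS" using h iter_F by simp
  ultimately show ?thesis unfolding II_def' by blast
qed

lemma I_G: assumes "x \<in> II" shows "G x \<in> II"
proof -
  have h: "\<forall>n. iter_int F n x \<in> SS" using assms unfolding II_def' by blast
  have "iter_int F (-1) x = G x" by (simp add: iter_int_def invF)
  then have "G x \<in> SS" using h by metis
  moreover have "\<forall>n. iter_int F n (G x) \<in> SS" using h iter_G by simp
  ultimately show ?thesis unfolding II_def' by blast
qed

lemma I_Bx: "x \<in> II \<Longrightarrow> x \<in> Bx"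
  using box_sub unfolding II_def' by blast

lemma I_Fn: "x \<in> II \<Longrightarrow> (F ^^ n) x \<in> II"
  by (induction n) (auto simp: I_F)

lemma I_Gn: "x \<in> II \<Longrightarrow> (G ^^ n) x \<in> II"
  by (induction n) (auto simp: I_G)

lemma F_image: "F ` II = II"
proof
  show "F ` II \<subseteq> II" using I_F by blast
  show "II \<subseteq> F ` II"
  proof
    fix x assume "x \<in> II"
    then have "G x \<in> II" "x = F (G x)" using I_G FG by auto
    then show "x \<in> F ` II" by blast
  qed
qed

lemma cont_Fn: "isCont (F ^^ k) x"
  using has_derivative_continuous[OF Dk_deriv] by blast
lemma cont_Gn: "isCont (G ^^ k) x"
  using has_derivative_continuous[OF Bk_deriv] by blast

lemma cont_iter: "isCont (iter_int F n) x"
  unfolding iter_int_def invF using cont_Fn cont_Gn by simp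

lemma compact_cube: "compact cubeB"
proof -
  have "cubeB = cbox (-1) 1"
    unfolding cubeB_def by (auto simp: mem_box_cart abs_le_iff)
  then show ?thesis using compact_cbox by metis
qed

lemma compact_SS: "compact SS"
  unfolding box_a_def box_b_def
  by (intro compact_Un compact_continuous_image compact_cube continuous_intros
      matrix_vector_mult_linear_continuous_on)

lemma compact_II: "compact II"
proof -
  have "II = SS \<inter> (\<Inter>n. iter_int F n -` SS)" unfolding II_def' by auto
  moreover have "closed (\<Inter>n. iter_int F n -` SS)"
    by (intro closed_INT ballI continuous_closed_vimage compact_imp_closed compact_SS cont_iter)
  ultimately show ?thesis using compact_Int_closed compact_SS by metis
qed


lemma NQ_nonneg: "0 \<le> NN p v" "0 \<le> QQ p v" unfolding NN_def QQ_def by auto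

lemma U1: assumes x: "x \<in> II" and c: "QQ x v \<le> NN x v"
  shows "21/20 * NN x v \<le> NN (F x) (LF x v) \<and> QQ (F x) (LF x v) \<le> NN (F x) (LF x v)"
proof -
  have b: "x \<in> Bx" "F x \<in> Bx" using x I_F I_Bx by auto
  have k1: "21/20 * NN x v \<le> NN (F x) (LF x v)" using KEY(1)[OF b c] .
  have k2: "QQ (F x) (LF x v) \<le> 20/21 * max (NN x v) (QQ x v)" using KEY(2)[OF b] .
  have "max (NN x v) (QQ x v) = NN x v" using c by simp
  then show ?thesis using k1 k2 NQ_nonneg[of x v] by simp
qed

lemma S1: assumes x: "x \<in> II" and c: "NN (F x) (LF x v) \<le> QQ (F x) (LF x v)"
  shows "NN x v \<le> QQ x v \<and> QQ (F x) (LF x v) \<le> 20/21 * QQ x v"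
proof -
  have b: "x \<in> Bx" "F x \<in> Bx" using x I_F I_Bx by auto
  have k2: "QQ (F x) (LF x v) \<le> 20/21 * max (NN x v) (QQ x v)" using KEY(2)[OF b] .
  have cs: "NN x v \<le> QQ x v"
  proof (rule ccontr)
    assume "\<not> NN x v \<le> QQ x v"
    then have lt: "QQ x v < NN x v" by simp
    then have "21/20 * NN x v \<le> NN (F x) (LF x v)" using KEY(1)[OF b] by simp
    moreover have "max (NN x v) (QQ x v) = NN x v" using lt by simp
    ultimately show False using k2 c lt NQ_nonneg[of x v] by simp
  qed
  moreover have "max (NN x v) (QQ x v) = QQ x v" using cs by simp
  ultimately show ?thesis using k2 by simp
qed

lemma FSuc: "(F ^^ Suc k) x = (F ^^ k) (F x)" by (simp only: funpow_Suc_right o_apply)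
lemma GSuc: "(G ^^ Suc k) x = (G ^^ k) (G x)" by (simp only: funpow_Suc_right o_apply)
lemma DSuc: "Dk (Suc k) x v = Dk k (F x) (LF x v)" by simp
lemma BSuc: "Bk (Suc k) x v = Bk k (G x) (LG x v)" by simp

lemma DU: assumes "x \<in> II" "QQ x v \<le> NN x v"
  shows "QQ ((F ^^ k) x) (Dk k x v) \<le> NN ((F ^^ k) x) (Dk k x v)
     \<and> (21/20)^k * NN x v \<le> NN ((F ^^ k) x) (Dk k x v)"
  using assms
proof (induction k arbitrary: x v)
  case 0 then show ?case by simp
next
  case (Suc k)
  have u: "21/20 * NN x v \<le> NN (F x) (LF x v)" "QQ (F x) (LF x v) \<le> NN (F x) (LF x v)"
    using U1[OF Suc.prems] by auto
  have IH: "QQ ((F ^^ k) (F x)) (Dk k (F x) (LF x v)) \<le> NN ((F ^^ k) (F x)) (Dk k (F x) (LF x v))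
     \<and> (21/20)^k * NN (F x) (LF x v) \<le> NN ((F ^^ k) (F x)) (Dk k (F x) (LF x v))"
    using Suc.IH[OF I_F[OF Suc.prems(1)] u(2)] .
  have "(21/20)^(Suc k) * NN x v = (21/20)^k * (21/20 * NN x v)" by simp
  also have "\<dots> \<le> (21/20)^k * NN (F x) (LF x v)" using u(1) by (intro mult_left_mono) auto
  finally show ?case using IH unfolding FSuc DSuc by linarith
qed

lemma DS_back: assumes "x \<in> II" "NN ((F ^^ k) x) (Dk k x v) \<le> QQ ((F ^^ k) x) (Dk k x v)"
  shows "\<forall>j\<le>k. NN ((F ^^ j) x) (Dk j x v) \<le> QQ ((F ^^ j) x) (Dk j x v)"
  using assms
proof (induction k arbitrary: x v)
  case 0 then show ?case by simp
next
  case (Suc k)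
  have IH: "\<forall>j\<le>k. NN ((F ^^ j) (F x)) (Dk j (F x) (LF x v)) \<le> QQ ((F ^^ j) (F x)) (Dk j (F x) (LF x v))"
    using Suc.IH[OF I_F[OF Suc.prems(1)]] Suc.prems(2) unfolding FSuc DSuc by blast
  show ?case
  proof (intro allI impI)
    fix j assume j: "j \<le> Suc k"
    show "NN ((F ^^ j) x) (Dk j x v) \<le> QQ ((F ^^ j) x) (Dk j x v)"
    proof (cases j)
      case 0
      have "NN (F x) (LF x v) \<le> QQ (F x) (LF x v)" using IH[rule_format, of 0] by simp
      then show ?thesis using S1[OF Suc.prems(1)] 0 by simp
    next
      case (Suc j')
      have "j' \<le> k" using j Suc by simp
      then have "NN ((F ^^ j') (F x)) (Dk j' (F x) (LF x v)) \<le> QQ ((F ^^ j') (F x)) (Dk j' (F x) (LF x v))"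
        using IH by blast
      then show ?thesis unfolding Suc FSuc DSuc .
    qed
  qed
qed

lemma DS_contr: assumes "x \<in> II" "\<forall>j. NN ((F ^^ j) x) (Dk j x v) \<le> QQ ((F ^^ j) x) (Dk j x v)"
  shows "QQ ((F ^^ k) x) (Dk k x v) \<le> (20/21)^k * QQ x v"
  using assms
proof (induction k arbitrary: x v)
  case 0 then show ?case by simp
next
  case (Suc k)
  have h: "\<forall>j. NN ((F ^^ j) (F x)) (Dk j (F x) (LF x v)) \<le> QQ ((F ^^ j) (F x)) (Dk j (F x) (LF x v))"
  proof
    fix j show "NN ((F ^^ j) (F x)) (Dk j (F x) (LF x v)) \<le> QQ ((F ^^ j) (F x)) (Dk j (F x) (LF x v))"
      using Suc.prems(2)[rule_format, of "Suc j"] unfolding FSuc DSuc .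
  qed
  have c1: "NN (F x) (LF x v) \<le> QQ (F x) (LF x v)" using h[rule_format, of 0] by simp
  have s: "QQ (F x) (LF x v) \<le> 20/21 * QQ x v" using S1[OF Suc.prems(1) c1] by simp
  have IH: "QQ ((F ^^ k) (F x)) (Dk k (F x) (LF x v)) \<le> (20/21)^k * QQ (F x) (LF x v)"
    using Suc.IH[OF I_F[OF Suc.prems(1)] h] .
  also have "\<dots> \<le> (20/21)^k * (20/21 * QQ x v)" using s by (intro mult_left_mono) auto
  finally show ?case unfolding FSuc DSuc by simp
qed

lemma BS: assumes "x \<in> II" "NN x w \<le> QQ x w"
  shows "NN ((G ^^ k) x) (Bk k x w) \<le> QQ ((G ^^ k) x) (Bk k x w)
     \<and> (21/20)^k * QQ x w \<le> QQ ((G ^^ k) x) (Bk k x w)"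
  using assms
proof (induction k arbitrary: x w)
  case 0 then show ?case by simp
next
  case (Suc k)
  have z: "G x \<in> II" using I_G[OF Suc.prems(1)] .
  have e: "F (G x) = x" "LF (G x) (LG x w) = w" using FG LF_LG by auto
  have "NN (F (G x)) (LF (G x) (LG x w)) \<le> QQ (F (G x)) (LF (G x) (LG x w))"
    using Suc.prems(2) e by simp
  from S1[OF z this] e have s: "NN (G x) (LG x w) \<le> QQ (G x) (LG x w)" "QQ x w \<le> 20/21 * QQ (G x) (LG x w)"
    by auto
  have IH: "NN ((G ^^ k) (G x)) (Bk k (G x) (LG x w)) \<le> QQ ((G ^^ k) (G x)) (Bk k (G x) (LG x w))
     \<and> (21/20)^k * QQ (G x) (LG x w) \<le> QQ ((G ^^ k) (G x)) (Bk k (G x) (LG x w))"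
    using Suc.IH[OF z s(1)] .
  have "(21/20)^(Suc k) * QQ x w = (21/20)^k * (21/20 * QQ x w)" by simp
  also have "\<dots> \<le> (21/20)^k * QQ (G x) (LG x w)" using s(2) by (intro mult_left_mono) auto
  finally show ?case using IH unfolding GSuc BSuc by linarith
qed

lemma BU_contr: assumes "x \<in> II" "\<forall>j. QQ ((G ^^ j) x) (Bk j x w) \<le> NN ((G ^^ j) x) (Bk j x w)"
  shows "NN ((G ^^ k) x) (Bk k x w) \<le> (20/21)^k * NN x w"
  using assms
proof (induction k arbitrary: x w)
  case 0 then show ?case by simp
next
  case (Suc k)
  have z: "G x \<in> II" using I_G[OF Suc.prems(1)] .
  have e: "F (G x) = x" "LF (G x) (LG x w) = w" using FG LF_LG by auto
  have h: "\<forall>j. QQ ((G ^^ j) (G x)) (Bk j (G x) (LG x w)) \<le> NN ((G ^^ j) (G x)) (Bk j (G x) (LG x w))"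
  proof
    fix j show "QQ ((G ^^ j) (G x)) (Bk j (G x) (LG x w)) \<le> NN ((G ^^ j) (G x)) (Bk j (G x) (LG x w))"
      using Suc.prems(2)[rule_format, of "Suc j"] unfolding GSuc BSuc .
  qed
  have c1: "QQ (G x) (LG x w) \<le> NN (G x) (LG x w)" using h[rule_format, of 0] by simp
  have s: "21/20 * NN (G x) (LG x w) \<le> NN x w" using U1[OF z c1] e by simp
  have IH: "NN ((G ^^ k) (G x)) (Bk k (G x) (LG x w)) \<le> (20/21)^k * NN (G x) (LG x w)"
    using Suc.IH[OF z h] .
  also have "\<dots> \<le> (20/21)^k * (20/21 * NN x w)" using s by (intro mult_left_mono) auto
  finally show ?case unfolding GSuc BSuc by simp
qed


definition Es :: "real^3 \<Rightarrow> (real^3) set" where "Es x = {v. bounded (range (\<lambda>k. Dk k x v))}"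
definition Eu :: "real^3 \<Rightarrow> (real^3) set" where "Eu x = {v. bounded (range (\<lambda>k. Bk k x v))}"

lemma subspace_bounded_orbit:
  fixes A :: "nat \<Rightarrow> 'a::real_normed_vector \<Rightarrow> 'b::real_normed_vector"
  assumes lin: "\<And>k. linear (A k)"
  shows "subspace {v. bounded (range (\<lambda>k. A k v))}"
  unfolding subspace_def
proof (intro conjI ballI allI)
  show "0 \<in> {v. bounded (range (\<lambda>k. A k v))}" using linear_0[OF lin] by simp
next
  fix u v assume u: "u \<in> {v. bounded (range (\<lambda>k. A k v))}" and v: "v \<in> {v. bounded (range (\<lambda>k. A k v))}"
  obtain a where a: "\<forall>k. norm (A k u) \<le> a" using u unfolding bounded_iff by auto
  obtain b where b: "\<forall>k. norm (A k v) \<le> b" using v unfolding bounded_iff by auto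
  have "\<forall>k. norm (A k (u + v)) \<le> a + b"
  proof
    fix k
    have "norm (A k (u + v)) = norm (A k u + A k v)" using linear_add[OF lin] by simp
    also have "\<dots> \<le> norm (A k u) + norm (A k v)" by (rule norm_triangle_ineq)
    finally show "norm (A k (u + v)) \<le> a + b" using a b by (smt (verit))
  qed
  then show "u + v \<in> {v. bounded (range (\<lambda>k. A k v))}" unfolding bounded_iff by auto
next
  fix c :: real and v assume v: "v \<in> {v. bounded (range (\<lambda>k. A k v))}"
  obtain b where b: "\<forall>k. norm (A k v) \<le> b" using v unfolding bounded_iff by auto
  have "\<forall>k. norm (A k (c *\<^sub>R v)) \<le> \<bar>c\<bar> * b"
  proof
    fix k
    have "norm (A k (c *\<^sub>R v)) = \<bar>c\<bar> * norm (A k v)" using linear_scale[OF lin] by simp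
    also have "\<dots> \<le> \<bar>c\<bar> * b" using b by (intro mult_left_mono) auto
    finally show "norm (A k (c *\<^sub>R v)) \<le> \<bar>c\<bar> * b" .
  qed
  then show "c *\<^sub>R v \<in> {v. bounded (range (\<lambda>k. A k v))}" unfolding bounded_iff by auto
qed

lemma subspace_Es: "subspace (Es x)" unfolding Es_def by (rule subspace_bounded_orbit[OF Dk_linear])
lemma subspace_Eu: "subspace (Eu x)" unfolding Eu_def by (rule subspace_bounded_orbit[OF Bk_linear])

lemma shift_bounded: "bounded (range (\<lambda>k. a (Suc k))) \<longleftrightarrow> bounded (range a)"
proof -
  have "range a = insert (a 0) (range (\<lambda>k. a (Suc k)))"
    by (metis UNIV_nat_eq image_insert image_image)
  then show ?thesis by simp
qed

lemma Es_inv: "LF x ` Es x = Es (F x)"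
proof
  show "LF x ` Es x \<subseteq> Es (F x)"
  proof
    fix w assume "w \<in> LF x ` Es x"
    then obtain v where v: "v \<in> Es x" "w = LF x v" by auto
    show "w \<in> Es (F x)" using v(1) shift_bounded[of "\<lambda>k. Dk k x v"] unfolding Es_def v(2) by simp
  qed
  show "Es (F x) \<subseteq> LF x ` Es x"
  proof
    fix w assume w: "w \<in> Es (F x)"
    define v where "v = LG (F x) w"
    have e: "LF x v = w" unfolding v_def using LF_LG[of "F x" w] GF by simp
    have "bounded (range (\<lambda>k. Dk (Suc k) x v))" using w e unfolding Es_def by simp
    then have "v \<in> Es x" using shift_bounded[of "\<lambda>k. Dk k x v"] unfolding Es_def by simp
    then show "w \<in> LF x ` Es x" using e by blast
  qed
qed

lemma Bk_Suc_F: "Bk (Suc k) (F x) (LF x v) = Bk k x v"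
  by (simp add: GF LG_LF)

lemma Eu_inv: "LF x ` Eu x = Eu (F x)"
proof
  show "LF x ` Eu x \<subseteq> Eu (F x)"
  proof
    fix w assume "w \<in> LF x ` Eu x"
    then obtain v where v: "v \<in> Eu x" "w = LF x v" by auto
    show "w \<in> Eu (F x)" using v(1) shift_bounded[of "\<lambda>k. Bk k (F x) w"] unfolding Eu_def v(2)
      by (simp add: GF LG_LF)
  qed
  show "Eu (F x) \<subseteq> LF x ` Eu x"
  proof
    fix w assume w: "w \<in> Eu (F x)"
    define v where "v = LG (F x) w"
    have e: "LF x v = w" unfolding v_def using LF_LG[of "F x" w] GF by simp
    have A: "bounded (range (\<lambda>k. Bk (Suc k) (F x) w))" using w shift_bounded[of "\<lambda>k. Bk k (F x) w"]
      unfolding Eu_def by blast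
    have eq: "(\<lambda>k. Bk (Suc k) (F x) w) = (\<lambda>k. Bk k x v)"
    proof
      fix k show "Bk (Suc k) (F x) w = Bk k x v" using Bk_Suc_F[of k x v] unfolding e .
    qed
    have "v \<in> Eu x" using A unfolding eq Eu_def by simp
    then show "w \<in> LF x ` Eu x" using e by blast
  qed
qed

lemma unbounded_pow: assumes "0 < a" "\<forall>k. (21/20::real)^k * a \<le> B" shows False
proof -
  obtain n where "B / a < (21/20::real)^n" using real_arch_pow[of "21/20" "B / a"] by auto
  then have "B < (21/20)^n * a" using assms(1) by (simp add: field_simps)
  then show False using assms(2) by (meson not_le)
qed

lemma Dk_0: "Dk k x 0 = 0" using linear_0[OF Dk_linear] .
lemma Bk_0: "Bk k x 0 = 0" using linear_0[OF Bk_linear] .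

lemma zero_from_NQ: assumes "p \<in> Bx" "NN p v = 0" "QQ p v = 0" shows "v = 0"
  using NB1[OF assms(1), of v] assms(2,3) by simp

lemma Es_strict: assumes x: "x \<in> II" and v: "v \<in> Es x" "v \<noteq> 0"
  shows "NN ((F ^^ j) x) (Dk j x v) < QQ ((F ^^ j) x) (Dk j x v)"
proof (rule ccontr)
  define y where "y = (F ^^ j) x"
  define u where "u = Dk j x v"
  assume "\<not> ?thesis"
  then have c: "QQ y u \<le> NN y u" unfolding y_def u_def by simp
  have y: "y \<in> II" unfolding y_def using I_Fn[OF x] .
  obtain B where B: "\<forall>k. norm (Dk k x v) \<le> B" using v(1) unfolding Es_def bounded_iff by auto
  show False
  proof (cases "NN y u = 0")
    case True
    then have "QQ y u = 0" using c NQ_nonneg[of y u] by simp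
    then have "u = 0" using zero_from_NQ[OF I_Bx[OF y] True] by simp
    then have "v = 0" using BD[of j x v] unfolding u_def by (simp add: Bk_0)
    then show False using v(2) by simp
  next
    case False
    then have pos: "0 < NN y u" using NQ_nonneg[of y u] by simp
    have "\<forall>k. (21/20)^k * NN y u \<le> 9 * B"
    proof
      fix k
      have "(21/20)^k * NN y u \<le> NN ((F ^^ k) y) (Dk k y u)" using DU[OF y c] by blast
      also have "\<dots> \<le> 9 * norm (Dk k y u)" using NB2(1)[OF I_Bx[OF I_Fn[OF y]]] .
      also have "Dk k y u = Dk (j + k) x v" unfolding y_def u_def by (simp add: DI_add)
      also have "9 * norm (Dk (j + k) x v) \<le> 9 * B" using B by simp
      finally show "(21/20)^k * NN y u \<le> 9 * B" .
    qed
    then show False using unbounded_pow[OF pos] by blast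
  qed
qed

lemma Es_bound: assumes x: "x \<in> II" and v: "v \<in> Es x" "v \<noteq> 0"
  shows "norm (Dk k x v) < 40 * (20/21)^k * norm v"
proof -
  have all: "\<forall>j. NN ((F ^^ j) x) (Dk j x v) \<le> QQ ((F ^^ j) x) (Dk j x v)"
    using Es_strict[OF x v] less_imp_le by blast
  have c: "QQ ((F ^^ k) x) (Dk k x v) \<le> (20/21)^k * QQ x v" using DS_contr[OF x all] .
  have q: "QQ x v \<le> 9 * norm v" using NB2(2)[OF I_Bx[OF x]] .
  have "norm (Dk k x v) \<le> 4 * max (NN ((F ^^ k) x) (Dk k x v)) (QQ ((F ^^ k) x) (Dk k x v))"
    using NB1[OF I_Bx[OF I_Fn[OF x]]] .
  also have "\<dots> = 4 * QQ ((F ^^ k) x) (Dk k x v)" using all by (simp add: max_def)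
  also have "\<dots> \<le> 4 * ((20/21)^k * QQ x v)" using c by simp
  also have "\<dots> \<le> 4 * ((20/21)^k * (9 * norm v))" using q by (intro mult_left_mono) auto
  also have "\<dots> < 40 * (20/21)^k * norm v" using v(2) by simp
  finally show ?thesis .
qed

lemma Eu_cone: assumes x: "x \<in> II" and v: "v \<in> Eu x"
  shows "QQ ((G ^^ j) x) (Bk j x v) \<le> NN ((G ^^ j) x) (Bk j x v)"
proof (rule ccontr)
  define y where "y = (G ^^ j) x"
  define u where "u = Bk j x v"
  assume "\<not> ?thesis"
  then have c: "NN y u < QQ y u" unfolding y_def u_def by simp
  have y: "y \<in> II" unfolding y_def using I_Gn[OF x] .
  obtain B where B: "\<forall>k. norm (Bk k x v) \<le> B" using v unfolding Eu_def bounded_iff by auto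
  have pos: "0 < QQ y u" using c NQ_nonneg[of y u] by simp
  have "\<forall>k. (21/20)^k * QQ y u \<le> 9 * B"
  proof
    fix k
    have "(21/20)^k * QQ y u \<le> QQ ((G ^^ k) y) (Bk k y u)" using BS[OF y] c by auto
    also have "\<dots> \<le> 9 * norm (Bk k y u)" using NB2(2)[OF I_Bx[OF I_Gn[OF y]]] .
    also have "Bk k y u = Bk (j + k) x v" unfolding y_def u_def by (simp add: DI_add)
    also have "9 * norm (Bk (j + k) x v) \<le> 9 * B" using B by simp
    finally show "(21/20)^k * QQ y u \<le> 9 * B" .
  qed
  then show False using unbounded_pow[OF pos] by blast
qed

lemma Eu_bound: assumes x: "x \<in> II" and v: "v \<in> Eu x" "v \<noteq> 0"
  shows "norm (Bk k x v) < 40 * (20/21)^k * norm v"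
proof -
  have all: "\<forall>j. QQ ((G ^^ j) x) (Bk j x v) \<le> NN ((G ^^ j) x) (Bk j x v)"
    using Eu_cone[OF x v(1)] by blast
  have c: "NN ((G ^^ k) x) (Bk k x v) \<le> (20/21)^k * NN x v" using BU_contr[OF x all] .
  have q: "NN x v \<le> 9 * norm v" using NB2(1)[OF I_Bx[OF x]] .
  have "norm (Bk k x v) \<le> 4 * max (NN ((G ^^ k) x) (Bk k x v)) (QQ ((G ^^ k) x) (Bk k x v))"
    using NB1[OF I_Bx[OF I_Gn[OF x]]] .
  also have "\<dots> = 4 * NN ((G ^^ k) x) (Bk k x v)" using all[rule_format, of k] by simp
  also have "\<dots> \<le> 4 * ((20/21)^k * NN x v)" using c by simp
  also have "\<dots> \<le> 4 * ((20/21)^k * (9 * norm v))" using q by (intro mult_left_mono) auto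
  also have "\<dots> < 40 * (20/21)^k * norm v" using v(2) by simp
  finally show ?thesis .
qed

lemma EsEu_inter: assumes x: "x \<in> II" and "v \<in> Es x" "v \<in> Eu x" shows "v = 0"
proof (rule ccontr)
  assume "v \<noteq> 0"
  then have "NN x v < QQ x v" using Es_strict[OF x assms(2), of 0] by simp
  moreover have "QQ x v \<le> NN x v" using Eu_cone[OF x assms(3), of 0] by simp
  ultimately show False by simp
qed


lemma nested_inter:
  fixes K :: "nat \<Rightarrow> 'a::metric_space set"
  assumes "compact Kc" "\<And>n. closed (K n)" "\<And>n. K n \<subseteq> Kc" "\<And>n. K n \<noteq> {}"
    "\<And>m n. m \<le> n \<Longrightarrow> K n \<subseteq> K m"
  shows "\<exists>v. \<forall>n. v \<in> K n"
proof -
  have "Kc \<inter> \<Inter>(range K) \<noteq> {}"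
  proof (rule compact_imp_fip[OF assms(1)])
    show "\<And>T. T \<in> range K \<Longrightarrow> closed T" using assms(2) by auto
  next
    fix F' assume F': "finite F'" "F' \<subseteq> range K"
    then obtain C where C: "finite C" "F' = K ` C" using finite_subset_image[OF F'] by auto
    define n where "n = Max (insert 0 C)"
    have "\<forall>c\<in>C. c \<le> n" unfolding n_def using C(1) by simp
    then have "K n \<subseteq> Kc \<inter> \<Inter>F'" using assms(3,5) C(2) by blast
    then show "Kc \<inter> \<Inter>F' \<noteq> {}" using assms(4)[of n] by blast
  qed
  then show ?thesis by blast
qed

lemma lin_coords:
  fixes A :: "real^3 \<Rightarrow> real^3"
  assumes "linear A"
  shows "linear (\<lambda>v. vector [(A v)$1, c * (A v)$2, 5 * (v$3 + v$1 / (2 * d))] :: real^3)"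
proof (rule linearI)
  fix u v :: "real^3"
  show "vector [(A (u + v))$1, c * (A (u + v))$2, 5 * ((u + v)$3 + (u + v)$1 / (2 * d))] =
    (vector [(A u)$1, c * (A u)$2, 5 * (u$3 + u$1 / (2 * d))] :: real^3) +
    vector [(A v)$1, c * (A v)$2, 5 * (v$3 + v$1 / (2 * d))]"
    by (rule vec3_eqI) (simp_all add: linear_add[OF assms] algebra_simps add_divide_distrib)
next
  fix r :: real and v :: "real^3"
  show "vector [(A (r *\<^sub>R v))$1, c * (A (r *\<^sub>R v))$2, 5 * ((r *\<^sub>R v)$3 + (r *\<^sub>R v)$1 / (2 * d))] =
    r *\<^sub>R (vector [(A v)$1, c * (A v)$2, 5 * (v$3 + v$1 / (2 * d))] :: real^3)"
    by (rule vec3_eqI) (simp_all add: linear_scale[OF assms] algebra_simps add_divide_distrib)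
qed

lemma surj_lin: fixes f :: "real^3 \<Rightarrow> real^3"
  assumes "linear f" "\<And>v. f v = 0 \<Longrightarrow> v = 0" shows "\<exists>v. f v = w"
proof -
  have "inj f" using assms linear_injective_0 by blast
  then have "surj f" using eucl.linear_injective_imp_surjective[OF assms(1)] by simp
  then show ?thesis by (metis surjD)
qed

lemma cont_NN: "continuous_on UNIV (NN p)" unfolding NN_def[abs_def] by (intro continuous_intros)
lemma cont_QQ: "continuous_on UNIV (QQ p)"
proof -
  have "QQ p = (\<lambda>v. \<bar>5 * (v$3 + (1 / (2 * p$3)) * v$1)\<bar>)" by (auto simp: QQ_def fun_eq_iff)
  show ?thesis unfolding \<open>QQ p = _\<close> by (intro continuous_intros)
qed

lemma cont_Dk: "continuous_on UNIV (Dk j x)"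
  by (rule linear_continuous_on[OF has_derivative_bounded_linear[OF Dk_deriv]])
lemma cont_Bk: "continuous_on UNIV (Bk j x)"
  by (rule linear_continuous_on[OF has_derivative_bounded_linear[OF Bk_deriv]])

lemma closed_le_comp:
  assumes "continuous_on UNIV A"
  shows "closed {v. NN p (A v) \<le> QQ p (A v)}" "closed {v. QQ p (A v) \<le> NN p (A v)}"
proof -
  have c1: "continuous_on UNIV (\<lambda>v. NN p (A v))" by (rule continuous_on_compose2[OF cont_NN assms]) auto
  have c2: "continuous_on UNIV (\<lambda>v. QQ p (A v))" by (rule continuous_on_compose2[OF cont_QQ assms]) auto
  show "closed {v. NN p (A v) \<le> QQ p (A v)}" by (rule closed_Collect_le[OF c1 c2])
  show "closed {v. QQ p (A v) \<le> NN p (A v)}" by (rule closed_Collect_le[OF c2 c1])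
qed

lemma compact_NQ: assumes "p \<in> Bx" shows "compact {v. NN p v \<le> R \<and> QQ p v \<le> R}"
  unfolding compact_eq_bounded_closed
proof (intro conjI)
  show "bounded {v. NN p v \<le> R \<and> QQ p v \<le> R}"
    unfolding bounded_iff
  proof (intro exI[of _ "4 * R"] ballI)
    fix v assume "v \<in> {v. NN p v \<le> R \<and> QQ p v \<le> R}"
    then have "max (NN p v) (QQ p v) \<le> R" by simp
    then show "norm v \<le> 4 * R" using NB1[OF assms, of v] by linarith
  qed
  show "closed {v. NN p v \<le> R \<and> QQ p v \<le> R}"
    using cont_NN cont_QQ by (intro closed_Collect_conj closed_Collect_le continuous_on_const)
qed


lemma ES_exist: assumes x: "x \<in> II" shows "\<exists>s\<in>Es x. s \<noteq> 0"
proof -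
  define K where "K n = {v. QQ x v = 1} \<inter>
     (\<Inter>j\<in>{..n}. {v. NN ((F ^^ j) x) (Dk j x v) \<le> QQ ((F ^^ j) x) (Dk j x v)})" for n
  define Kc where "Kc = {v. NN x v \<le> 1 \<and> QQ x v \<le> 1}"
  have cKc: "compact Kc" unfolding Kc_def by (rule compact_NQ[OF I_Bx[OF x]])
  have clK: "closed (K n)" for n
    unfolding K_def using cont_QQ
    by (intro closed_Int closed_INT ballI closed_le_comp(1) cont_Dk closed_Collect_eq continuous_on_const)
  have subK: "K n \<subseteq> Kc" for n
  proof
    fix v assume "v \<in> K n"
    then have "QQ x v = 1" "NN ((F ^^ 0) x) (Dk 0 x v) \<le> QQ ((F ^^ 0) x) (Dk 0 x v)" unfolding K_def by blast+
    then show "v \<in> Kc" unfolding Kc_def by simp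
  qed
  have monoK: "m \<le> n \<Longrightarrow> K n \<subseteq> K m" for m n unfolding K_def by auto
  have neK: "K n \<noteq> {}" for n
  proof -
    define \<Phi> where "\<Phi> = (\<lambda>v. vector [(Dk n x v)$1, ((F ^^ n) x)$2 * (Dk n x v)$2, 5 * (v$3 + v$1 / (2 * x$3))] :: real^3)"
    have lin: "linear \<Phi>" unfolding \<Phi>_def by (rule lin_coords[OF Dk_linear])
    have inj: "v = 0" if "\<Phi> v = 0" for v
    proof -
      have c: "(Dk n x v)$1 = 0" "((F ^^ n) x)$2 * (Dk n x v)$2 = 0" "5 * (v$3 + v$1 / (2 * x$3)) = 0"
        using that unfolding \<Phi>_def by (simp_all add: vec_eq_iff forall_3)
      then have N0: "NN ((F ^^ n) x) (Dk n x v) = 0" and Q0: "QQ x v = 0"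
        unfolding NN_def QQ_def by simp_all
      then have "QQ x v \<le> NN x v" using NQ_nonneg[of x v] by simp
      from DU[OF x this, of n] N0 have "(21/20)^n * NN x v \<le> 0" by simp
      then have "NN x v = 0" using NQ_nonneg[of x v]
        by (metis mult_le_0_iff order_antisym_conv zero_less_divide_iff zero_less_numeral zero_less_power not_le)
      then show "v = 0" using zero_from_NQ[OF I_Bx[OF x] _ Q0] by simp
    qed
    obtain v where v: "\<Phi> v = vector [0, 0, 1]" using surj_lin[OF lin inj] by blast
    have c: "(Dk n x v)$1 = 0" "((F ^^ n) x)$2 * (Dk n x v)$2 = 0" "5 * (v$3 + v$1 / (2 * x$3)) = 1"
      using v unfolding \<Phi>_def by (simp_all add: vec_eq_iff forall_3)
    then have "NN ((F ^^ n) x) (Dk n x v) \<le> QQ ((F ^^ n) x) (Dk n x v)" "QQ x v = 1"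
      unfolding NN_def QQ_def by auto
    then have "v \<in> K n" using DS_back[OF x] unfolding K_def by auto
    then show ?thesis by blast
  qed
  have "\<exists>v. \<forall>n. v \<in> K n"
    apply (rule nested_inter[of Kc K])
    using cKc clK subK neK monoK by auto
  then obtain s where s: "\<And>n. s \<in> K n" by blast
  have q1: "QQ x s = 1" using s[of 0] unfolding K_def by simp
  have all: "\<forall>j. NN ((F ^^ j) x) (Dk j x s) \<le> QQ ((F ^^ j) x) (Dk j x s)"
    using s unfolding K_def by blast
  have "\<forall>k. norm (Dk k x s) \<le> 4"
  proof
    fix k
    have "norm (Dk k x s) \<le> 4 * max (NN ((F ^^ k) x) (Dk k x s)) (QQ ((F ^^ k) x) (Dk k x s))"
      using NB1[OF I_Bx[OF I_Fn[OF x]]] .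
    also have "\<dots> = 4 * QQ ((F ^^ k) x) (Dk k x s)" using all[rule_format, of k] by simp
    also have "\<dots> \<le> 4 * ((20/21)^k * QQ x s)" using DS_contr[OF x all, of k] by simp
    also have "\<dots> \<le> 4" using q1 by (simp add: power_le_one)
    finally show "norm (Dk k x s) \<le> 4" .
  qed
  then have "s \<in> Es x" unfolding Es_def bounded_iff by auto
  moreover have "s \<noteq> 0" using q1 unfolding QQ_def by auto
  ultimately show ?thesis by blast
qed

lemma BkDk: assumes "n = m + j" shows "Bk j ((F ^^ n) y) (Dk n y w) = Dk m y w"
proof -
  define z where "z = (F ^^ m) y"
  have "Dk n y w = Dk j z (Dk m y w)" unfolding assms z_def by (simp add: DI_add[of F LF m j])
  moreover have "(F ^^ n) y = (F ^^ j) z" unfolding assms z_def by (simp add: add.commute[of m j] funpow_add)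
  ultimately show ?thesis using BD[of j z "Dk m y w"] by simp
qed

lemma EU_exist: assumes x: "x \<in> II" shows "\<exists>u\<in>Eu x. u$1 = \<alpha> \<and> x$2 * u$2 = \<beta>"
proof -
  define R where "R = max \<bar>\<alpha>\<bar> \<bar>\<beta>\<bar>"
  define K where "K n = {v. v$1 = \<alpha> \<and> x$2 * v$2 = \<beta>} \<inter>
     (\<Inter>j\<in>{..n}. {v. QQ ((G ^^ j) x) (Bk j x v) \<le> NN ((G ^^ j) x) (Bk j x v)})" for n
  define Kc where "Kc = {v. NN x v \<le> R \<and> QQ x v \<le> R}"
  have cKc: "compact Kc" unfolding Kc_def by (rule compact_NQ[OF I_Bx[OF x]])
  have cl1: "closed {v::real^3. v$1 = \<alpha> \<and> x$2 * v$2 = \<beta>}"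
    by (intro closed_Collect_conj closed_Collect_eq continuous_intros)
  have clK: "closed (K n)" for n
    unfolding K_def using cl1
    by (intro closed_Int closed_INT ballI closed_le_comp(2) cont_Bk)
  have subK: "K n \<subseteq> Kc" for n
  proof
    fix v assume "v \<in> K n"
    then have "v$1 = \<alpha>" "x$2 * v$2 = \<beta>" "QQ ((G ^^ 0) x) (Bk 0 x v) \<le> NN ((G ^^ 0) x) (Bk 0 x v)"
      unfolding K_def by blast+
    then show "v \<in> Kc" unfolding Kc_def R_def NN_def by simp
  qed
  have monoK: "m \<le> n \<Longrightarrow> K n \<subseteq> K m" for m n unfolding K_def by auto
  have neK: "K n \<noteq> {}" for n
  proof -
    define y where "y = (G ^^ n) x"
    have y: "y \<in> II" unfolding y_def using I_Gn[OF x] .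
    have Fny: "(F ^^ n) y = x" unfolding y_def by (rule funpow_inverse_gen[where f=F and g=G, OF FG])
    define \<Phi> where "\<Phi> = (\<lambda>w. vector [(Dk n y w)$1, x$2 * (Dk n y w)$2, 5 * (w$3 + w$1 / (2 * y$3))] :: real^3)"
    have lin: "linear \<Phi>" unfolding \<Phi>_def by (rule lin_coords[OF Dk_linear])
    have inj: "w = 0" if "\<Phi> w = 0" for w
    proof -
      have c: "(Dk n y w)$1 = 0" "x$2 * (Dk n y w)$2 = 0" "5 * (w$3 + w$1 / (2 * y$3)) = 0"
        using that unfolding \<Phi>_def by (simp_all add: vec_eq_iff forall_3)
      then have N0: "NN ((F ^^ n) y) (Dk n y w) = 0" and Q0: "QQ y w = 0"
        unfolding NN_def QQ_def Fny by simp_all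
      then have "QQ y w \<le> NN y w" using NQ_nonneg[of y w] by simp
      from DU[OF y this, of n] N0 have "(21/20)^n * NN y w \<le> 0" by simp
      then have "NN y w = 0" using NQ_nonneg[of y w]
        by (metis mult_le_0_iff order_antisym_conv zero_less_divide_iff zero_less_numeral zero_less_power not_le)
      then show "w = 0" using zero_from_NQ[OF I_Bx[OF y] _ Q0] by simp
    qed
    obtain w where w: "\<Phi> w = vector [\<alpha>, \<beta>, 0]" using surj_lin[OF lin inj] by blast
    have c: "(Dk n y w)$1 = \<alpha>" "x$2 * (Dk n y w)$2 = \<beta>" "5 * (w$3 + w$1 / (2 * y$3)) = 0"
      using w unfolding \<Phi>_def by (simp_all add: vec_eq_iff forall_3)
    have cu: "QQ y w \<le> NN y w" using c(3) NQ_nonneg[of y w] unfolding QQ_def by simp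
    have "QQ ((G ^^ j) x) (Bk j x (Dk n y w)) \<le> NN ((G ^^ j) x) (Bk j x (Dk n y w))" if j: "j \<le> n" for j
    proof -
      define m where "m = n - j"
      have nm: "n = m + j" unfolding m_def using j by simp
      have e1: "Bk j x (Dk n y w) = Dk m y w" using BkDk[OF nm, of y w] Fny by simp
      have "x = (F ^^ j) ((F ^^ m) y)" using Fny unfolding nm by (simp add: add.commute[of m j] funpow_add)
      then have e2: "(G ^^ j) x = (F ^^ m) y" using funpow_inverse_gen[where f=G and g=F, OF GF] by metis
      show ?thesis unfolding e1 e2 using DU[OF y cu, of m] by blast
    qed
    then have "Dk n y w \<in> K n" unfolding K_def using c(1,2) by auto
    then show ?thesis by blast
  qed
  have "\<exists>v. \<forall>n. v \<in> K n"
    apply (rule nested_inter[of Kc K])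
    using cKc clK subK neK monoK by auto
  then obtain u where u: "\<And>n. u \<in> K n" by blast
  have c: "u$1 = \<alpha>" "x$2 * u$2 = \<beta>" using u[of 0] unfolding K_def by auto
  have all: "\<forall>j. QQ ((G ^^ j) x) (Bk j x u) \<le> NN ((G ^^ j) x) (Bk j x u)"
    using u unfolding K_def by blast
  have "\<forall>k. norm (Bk k x u) \<le> 4 * NN x u"
  proof
    fix k
    have "norm (Bk k x u) \<le> 4 * max (NN ((G ^^ k) x) (Bk k x u)) (QQ ((G ^^ k) x) (Bk k x u))"
      using NB1[OF I_Bx[OF I_Gn[OF x]]] .
    also have "\<dots> = 4 * NN ((G ^^ k) x) (Bk k x u)" using all[rule_format, of k] by simp
    also have "\<dots> \<le> 4 * ((20/21)^k * NN x u)" using BU_contr[OF x all, of k] by simp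
    also have "\<dots> \<le> 4 * NN x u" using NQ_nonneg[of x u]
      by (simp add: mult_left_le_one_le power_le_one)
    finally show "norm (Bk k x u) \<le> 4 * NN x u" .
  qed
  then have "u \<in> Eu x" unfolding Eu_def bounded_iff by auto
  then show ?thesis using c by blast
qed


lemma span_EuEs: assumes x: "x \<in> II" shows "\<exists>u\<in>Eu x. \<exists>s\<in>Es x. w = u + s"
proof -
  obtain s0 where s0: "s0 \<in> Es x" "s0 \<noteq> 0" using ES_exist[OF x] by blast
  obtain u1 where u1: "u1 \<in> Eu x" "u1$1 = 1" "x$2 * u1$2 = 0" using EU_exist[OF x] by blast
  obtain u2 where u2: "u2 \<in> Eu x" "u2$1 = 0" "x$2 * u2$2 = 1" using EU_exist[OF x] by blast
  define T where "T = (\<lambda>c::real^3. c$1 *\<^sub>R u1 + c$2 *\<^sub>R u2 + c$3 *\<^sub>R s0)"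
  have lin: "linear T" unfolding T_def
    by (rule linearI) (simp_all add: algebra_simps scaleR_add_left)
  have inj: "c = 0" if "T c = 0" for c
  proof -
    define a where "a = c$1 *\<^sub>R u1 + c$2 *\<^sub>R u2"
    have aEu: "a \<in> Eu x" unfolding a_def using subspace_Eu u1(1) u2(1)
      by (intro subspace_add subspace_scale) auto
    have "a = - (c$3 *\<^sub>R s0)" using that unfolding T_def a_def by (simp add: eq_neg_iff_add_eq_0)
    moreover have "- (c$3 *\<^sub>R s0) \<in> Es x" using subspace_Es s0(1)
      by (intro subspace_neg subspace_scale) auto
    ultimately have "a \<in> Es x" by simp
    then have a0: "a = 0" using EsEu_inter[OF x _ aEu] by simp
    then have "c$3 *\<^sub>R s0 = 0" using that unfolding T_def a_def by simp
    then have c3: "c$3 = 0" using s0(2) by simp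
    have "a$1 = c$1" unfolding a_def using u1 u2 by simp
    then have c1: "c$1 = 0" using a0 by simp
    have "x$2 * a$2 = c$1 * (x$2 * u1$2) + c$2 * (x$2 * u2$2)" unfolding a_def by (simp add: algebra_simps)
    then have c2: "c$2 = 0" using a0 u1(3) u2(3) by simp
    show "c = 0" using c1 c2 c3 by (intro vec3_eqI) simp_all
  qed
  obtain c where c: "T c = w" using surj_lin[OF lin inj] by blast
  have "c$1 *\<^sub>R u1 + c$2 *\<^sub>R u2 \<in> Eu x" using subspace_Eu u1(1) u2(1)
    by (intro subspace_add subspace_scale) auto
  moreover have "c$3 *\<^sub>R s0 \<in> Es x" using subspace_Es s0(1) by (intro subspace_scale) auto
  moreover have "w = (c$1 *\<^sub>R u1 + c$2 *\<^sub>R u2) + c$3 *\<^sub>R s0" using c unfolding T_def by simp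
  ultimately show ?thesis by blast
qed


lemma HF: "H ^^ 4 = F" by (simp only: F_def)
lemma IIF: "Inv F SS = II" by (simp only: F_def)
lemma fd: "frechet_derivative F (at x) = LF x" using frechet_derivative_at[OF F_deriv] by (rule sym)
lemma fdk: "frechet_derivative (F ^^ k) (at x) = Dk k x" using frechet_derivative_at[OF Dk_deriv] by (rule sym)
lemma fbk: "frechet_derivative (G ^^ k) (at x) = Bk k x" using frechet_derivative_at[OF Bk_deriv] by (rule sym)

lemma pointwise: assumes x: "x \<in> II"
  shows "subspace (Eu x) \<and> subspace (Es x) \<and> Eu x \<inter> Es x = {0} \<and>
          (\<forall>w. \<exists>u\<in>Eu x. \<exists>s\<in>Es x. w = u + s) \<and>
          LF x ` Eu x = Eu (F x) \<and>
          LF x ` Es x = Es (F x) \<and>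
          (\<forall>k::nat. \<forall>v\<in>Es x. v \<noteq> 0 \<longrightarrow>
             norm (Dk k x v) < 40 * (20/21) ^ k * norm v) \<and>
          (\<forall>k::nat. \<forall>v\<in>Eu x. v \<noteq> 0 \<longrightarrow>
             norm (Bk k x v) < 40 * (20/21) ^ k * norm v)"
proof -
  have a: "Eu x \<inter> Es x = {0}"
    using EsEu_inter[OF x] subspace_0[OF subspace_Eu] subspace_0[OF subspace_Es] by blast
  have b: "\<forall>w. \<exists>u\<in>Eu x. \<exists>s\<in>Es x. w = u + s" using span_EuEs[OF x] by blast
  have c: "\<forall>k::nat. \<forall>v\<in>Es x. v \<noteq> 0 \<longrightarrow> norm (Dk k x v) < 40 * (20/21) ^ k * norm v"
    using Es_bound[OF x] by blast
  have d: "\<forall>k::nat. \<forall>v\<in>Eu x. v \<noteq> 0 \<longrightarrow> norm (Bk k x v) < 40 * (20/21) ^ k * norm v"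
    using Eu_bound[OF x] by blast
  show ?thesis by (intro conjI subspace_Eu subspace_Es Eu_inv Es_inv a b c d)
qed

lemma diffs: "(F ^^ k) differentiable at x \<and> (G ^^ k) differentiable at x"
proof
  show "(F ^^ k) differentiable at x" by (rule differentiableI[OF Dk_deriv])
  show "(G ^^ k) differentiable at x" by (rule differentiableI[OF Bk_deriv])
qed

theorem theorem4p4:
  shows "unif_hyperbolic (H ^^ 4) (Inv (H ^^ 4) (box_a \<union> box_b))"
proof -
  have "unif_hyperbolic F II"
    unfolding unif_hyperbolic_def invF fd fdk fbk
    apply (intro conjI compact_II F_image ballI allI differentiableI[OF Dk_deriv] differentiableI[OF Bk_deriv])
    apply (rule exI[of _ Eu], rule exI[of _ Es], rule exI[of _ 40], rule exI[of _ "20/21"])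
    using pointwise by simp
  then show ?thesis by (simp only: F_def)
qed


end
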